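(* In the semi-discrete heat setting described in the context, assume that the reference state $u$ satisfies the discrete non-degeneracy condition: for all $t>0$ and all $j\in\{1,\dots,N-1\}$, $\frac12u_{(2,j)}(t)-2u_{(1,j)}(t)\neq0$. Let $c\in\mathcal{F}(\mathring\Omega_h)$ and let $X$ solve $-\partial_tX+AX=c\,\delta_{t=T}$, $X(0)=0$. If \[\int_0^T\sum_{m\in\mathring\Omega_h}X_m(t)\big[\langle A'(0),\mu(t)V_j\rangle u(t)\big]_m\,dt=0\] for all $j\in\{1,\dots,N-1\}$ and all $\mu\in C_0^\infty(\mathbb{R}^+,\mathbb{R})$, then $X|_{\Gamma^1}\equiv0$, i.e. $X_{(1,j)}(t)=0$ for all $t>0$ and all $j\in\{1,\dots,N-1\}$.
   Context: Let $h>0$, integers $M,N\ge2$, grid $\Omega_h=\{(ih,jh):0\le i\le M,0\le j\le N\}$ with nodes indexed $(i,j)$, interior $\mathring\Omega_h=\{1\le i\le M-1,1\le j\le N-1\}$, $\Gamma^1=\{(1,j):1\le j\le N-1\}$; functions on $\mathring\Omega_h$ are extended by $0$ on boundary nodes. Perturbations are $\varphi(t)=\sum_jh\lambda_j(t)V_j$ ($V_j$ the unit horizontal vector at boundary node $(0,j)$), and $A(\varphi)$ is the 5-point operator $[A(\varphi)\phi]_{(i,j)}=h^{-2}(4\phi_{(i,j)}-\phi_{(i+1,j)}-\phi_{(i-1,j)}-\phi_{(i,j+1)}-\phi_{(i,j-1)})$ off $\Gamma^1$ and $[A(\varphi)\phi]_{(1,j)}=h^{-2}\big(2(1+\frac{1}{1+\lambda_j(t)})\phi_{(1,j)}-\frac{2}{2+\lambda_j(t)}\phi_{(2,j)}-\phi_{(1,j+1)}-\phi_{(1,j-1)}\big)$;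 $A=A(0)$. $\langle A'(0),\mu V_j\rangle$ denotes the derivative of $A(\cdot)$ at $0$ in the direction where $\lambda_j=\mu$ and $\lambda_k=0$ for $k\ne j$. The reference state $u$ solves $\partial_tu+Au=F$, $u(0)=u_0$ for given source $F$ and initial datum $u_0$. $c\,\delta_{t=T}$ acts by $\langle c\,\delta_{t=T},v\rangle=\sum_mc_mv_m(T)$. *)

theory Defs
  imports "HOL-Analysis.Analysis"
begin

text \<open>Grid nodes are pairs (i,j) of naturals; grid functions are maps nat \<times> nat \<Rightarrow> real,
  of which only the values on the interior nodes are relevant.\<close>

definition interior_nodes :: "nat \<Rightarrow> nat \<Rightarrow> (nat \<times> nat) set" where
  "interior_nodes M N = {(i, j). 1 \<le> i \<and> i \<le> M - 1 \<and> 1 \<le> j \<and> j \<le> N - 1}"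

definition ext0 :: "nat \<Rightarrow> nat \<Rightarrow> (nat \<times> nat \<Rightarrow> real) \<Rightarrow> (nat \<times> nat \<Rightarrow> real)" where
  "ext0 M N \<phi> = (\<lambda>m. if m \<in> interior_nodes M N then \<phi> m else 0)"

text \<open>The perturbed 5-point operator A(\<phi>), \<phi> = \<Sum>_j h \<lambda>_j V_j, parametrised by the
  coefficients lam j = \<lambda>_j.  Row i = 1 is the row \<Gamma>^1.\<close>
definition Aop :: "nat \<Rightarrow> nat \<Rightarrow> real \<Rightarrow> (nat \<Rightarrow> real) \<Rightarrow> (nat \<times> nat \<Rightarrow> real) \<Rightarrow> (nat \<times> nat \<Rightarrow> real)" where
  "Aop M N h lam \<phi> = (\<lambda>(i, j). let p = ext0 M N \<phi> in
     if i = 1 then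
       (2 * (1 + 1 / (1 + lam j)) * p (1, j) - 2 / (2 + lam j) * p (2, j)
          - p (1, j + 1) - p (1, j - 1)) / h\<^sup>2
     else
       (4 * p (i, j) - p (i + 1, j) - p (i - 1, j) - p (i, j + 1) - p (i, j - 1)) / h\<^sup>2)"

definition A0 :: "nat \<Rightarrow> nat \<Rightarrow> real \<Rightarrow> (nat \<times> nat \<Rightarrow> real) \<Rightarrow> (nat \<times> nat \<Rightarrow> real)" where
  "A0 M N h = Aop M N h (\<lambda>_. 0)"

text \<open>[<A'(0), a V_j> \<phi>]_m : derivative at 0 of A(\<cdot>) in the direction \<lambda>_j = a, \<lambda>_k = 0 (k \<noteq> j).\<close>
definition dA :: "nat \<Rightarrow> nat \<Rightarrow> real \<Rightarrow> nat \<Rightarrow> real \<Rightarrow> (nat \<times> nat \<Rightarrow> real) \<Rightarrow> (nat \<times> nat \<Rightarrow> real)" where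
  "dA M N h j a \<phi> = (\<lambda>m. deriv (\<lambda>s. Aop M N h (\<lambda>k. if k = j then s * a else 0) \<phi> m) 0)"

definition C0_inf_pos :: "(real \<Rightarrow> real) \<Rightarrow> bool" where
  "C0_inf_pos \<mu> \<longleftrightarrow> (\<forall>k x. ((deriv ^^ k) \<mu>) differentiable (at x))
     \<and> (\<exists>a b. 0 < a \<and> (\<forall>t. t < a \<or> b < t \<longrightarrow> \<mu> t = 0))"

end

theory Submission
  imports Defs
begin

lemma term_deriv:
  fixes x c :: real assumes "x \<noteq> 0"
  shows "((\<lambda>x. c * inverse x ^ i * exp (- inverse x)) has_real_derivative
     (- c * real i * inverse x ^ Suc i * exp (- inverse x) + c * inverse x ^ Suc (Suc i) * exp (- inverse x))) (at x)"
proof -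
  have "((\<lambda>x. c * inverse x ^ i * exp (- inverse x)) has_real_derivative
     (c * (real i * inverse x ^ (i - 1) * (- (inverse x * inverse x))) * exp (- inverse x) + c * inverse x ^ i * (exp (- inverse x) * (inverse x * inverse x)))) (at x)"
    using assms by (auto intro!: derivative_eq_intros)
  moreover have "(c * (real i * inverse x ^ (i - 1) * (- (inverse x * inverse x))) * exp (- inverse x) + c * inverse x ^ i * (exp (- inverse x) * (inverse x * inverse x)))
     = (- c * real i * inverse x ^ Suc i * exp (- inverse x) + c * inverse x ^ Suc (Suc i) * exp (- inverse x))"
    by (cases i) (auto simp: algebra_simps)
  ultimately show ?thesis by metis
qed

definition SL :: "(real \<times> nat) list \<Rightarrow> real \<Rightarrow> real" where
  "SL L x = sum_list (map (\<lambda>(c,i). c * inverse x ^ i * exp (- inverse x)) L)"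

fun D1 :: "real \<times> nat \<Rightarrow> (real \<times> nat) list" where
  "D1 (c,i) = [(- c * real i, Suc i), (c, Suc (Suc i))]"

definition DL :: "(real \<times> nat) list \<Rightarrow> (real \<times> nat) list" where
  "DL L = concat (map D1 L)"

lemma SL_deriv: "(x::real) \<noteq> 0 \<Longrightarrow> (SL L has_real_derivative SL (DL L) x) (at x)"
proof (induction L)
  case Nil
  then show ?case by (simp add: SL_def DL_def)
next
  case (Cons a L)
  obtain c i where a: "a = (c,i)" by force
  have e: "SL (a # L) = (\<lambda>x. c * inverse x ^ i * exp (- inverse x) + SL L x)"
    by (auto simp: SL_def a)
  have e2: "SL (DL (a # L)) x = (- c * real i * inverse x ^ Suc i * exp (- inverse x) + c * inverse x ^ Suc (Suc i) * exp (- inverse x)) + SL (DL L) x"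
    by (simp add: SL_def DL_def a)
  show ?case unfolding e e2
    by (rule DERIV_add[OF term_deriv[OF Cons.prems] Cons.IH[OF Cons.prems]])
qed

lemma term_lim: "((\<lambda>x::real. c * inverse x ^ i * exp (- inverse x)) \<longlongrightarrow> 0) (at_right 0)"
proof -
  have "((\<lambda>x::real. c * (x ^ i / exp x)) \<longlongrightarrow> c * 0) at_top"
    by (rule tendsto_mult[OF tendsto_const tendsto_power_div_exp_0])
  then have "((\<lambda>x::real. c * inverse (inverse x) ^ i * exp (- inverse (inverse x))) \<longlongrightarrow> 0) at_top"
    by (simp add: exp_minus divide_inverse mult.assoc)
  then show ?thesis unfolding filterlim_at_right_to_top .
qed

lemma SL_lim: "(SL L \<longlongrightarrow> 0) (at_right 0)"
proof (induction L)
  case Nil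
  then show ?case by (simp add: SL_def)
next
  case (Cons a L)
  obtain c i where a: "a = (c,i)" by force
  have e: "SL (a # L) = (\<lambda>x. c * inverse x ^ i * exp (- inverse x) + SL L x)"
    by (auto simp: SL_def a)
  show ?case unfolding e using tendsto_add[OF term_lim Cons.IH] by simp
qed

definition shiftL :: "(real \<times> nat) list \<Rightarrow> (real \<times> nat) list" where
  "shiftL L = map (\<lambda>(c,i). (c, Suc i)) L"

lemma SL_shift: "SL (shiftL L) x = SL L x * inverse x"
  by (induction L) (auto simp: SL_def shiftL_def algebra_simps)

definition gS :: "(real \<times> nat) list \<Rightarrow> real \<Rightarrow> real" where
  "gS L x = (if x > 0 then SL L x else 0)"

lemma gS_deriv: "(gS L has_real_derivative gS (DL L) x) (at x)"
proof (cases "x = 0")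
  case True
  have r: "((\<lambda>t. (gS L (0 + t) - gS L 0) / t) \<longlongrightarrow> 0) (at_right 0)"
  proof -
    have "\<forall>\<^sub>F t in at_right 0. SL (shiftL L) t = (gS L (0 + t) - gS L 0) / t"
      by (rule eventually_mono[OF eventually_at_right_less[of 0]]) (simp add: gS_def SL_shift divide_inverse)
    then show ?thesis by (rule Lim_transform_eventually[OF SL_lim[of "shiftL L"]])
  qed
  have l: "((\<lambda>t. (gS L (0 + t) - gS L 0) / t) \<longlongrightarrow> 0) (at_left 0)"
  proof -
    have "\<forall>\<^sub>F t in at_left 0. 0 = (gS L (0 + t) - gS L 0) / t"
    proof -
      have "eventually (\<lambda>t. t \<in> {-1<..<(0::real)}) (at_left 0)" by (rule eventually_at_left_real) simp
      then show ?thesis by (rule eventually_mono) (auto simp: gS_def)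
    qed
    then show ?thesis by (rule Lim_transform_eventually[OF tendsto_const])
  qed
  have "((\<lambda>t. (gS L (0 + t) - gS L 0) / t) \<longlongrightarrow> 0) (at 0)"
    by (rule filterlim_split_at[OF l r])
  then have "(gS L has_real_derivative 0) (at 0)" by (simp add: DERIV_def)
  then show ?thesis using True by (simp add: gS_def)
next
  case False
  show ?thesis
  proof (cases "x > 0")
    case True
    have "(SL L has_real_derivative SL (DL L) x) (at x)" using SL_deriv False by blast
    then have "(gS L has_real_derivative SL (DL L) x) (at x)"
      by (rule has_field_derivative_transform_within_open[where S="{0<..}"]) (auto simp: gS_def True)
    then show ?thesis using True by (simp add: gS_def)
  next
    case False2: False
    have "((\<lambda>_. 0) has_real_derivative 0) (at x)" by simp
    then have "(gS L has_real_derivative 0) (at x)"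
    proof (rule has_field_derivative_transform_within_open[where S="{..<0}"])
      show "open {..<(0::real)}" by simp
      show "x \<in> {..<0}" using False False2 by simp
      show "\<And>y. y \<in> {..<0} \<Longrightarrow> 0 = gS L y" by (simp add: gS_def)
    qed
    then show ?thesis using False2 by (simp add: gS_def)
  qed
qed

lemma smooth_class:
  assumes cl: "\<And>f. Q f \<Longrightarrow> \<exists>f'. (\<forall>x. (f has_real_derivative f' x) (at x)) \<and> Q f'"
    and q: "Q f"
  shows "Q ((deriv ^^ k) f) \<and> (\<forall>x. ((deriv ^^ k) f has_real_derivative (deriv ^^ Suc k) f x) (at x))"
proof (induction k)
  case 0
  obtain f' where d: "\<forall>x. (f has_real_derivative f' x) (at x)" "Q f'" using cl[OF q] by blast
  have "deriv f = f'" by (rule ext, rule DERIV_imp_deriv) (use d in blast)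
  then have "(deriv ^^ Suc 0) f = f'" by simp
  then show ?case using q d by simp
next
  case (Suc k)
  let ?g = "(deriv ^^ Suc k) f"
  obtain f' where d: "\<forall>x. ((deriv ^^ k) f has_real_derivative f' x) (at x)" "Q f'" using cl[OF conjunct1[OF Suc]] by blast
  have "deriv ((deriv ^^ k) f) = f'" by (rule ext, rule DERIV_imp_deriv) (use d in blast)
  then have "?g = f'" by (simp only: funpow.simps comp_def)
  then have qg: "Q ?g" using d by simp
  obtain g' where d2: "\<forall>x. (?g has_real_derivative g' x) (at x)" "Q g'" using cl[OF qg] by blast
  have "deriv ?g = g'" by (rule ext, rule DERIV_imp_deriv) (use d2 in blast)
  then have "(deriv ^^ Suc (Suc k)) f = g'" by (simp only: funpow.simps comp_def)
  then show ?case using qg d2 by (simp only:) simp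
qed

definition psi :: "real \<Rightarrow> real" where "psi = gS [(1,0)]"

definition Psi :: "nat \<Rightarrow> real \<Rightarrow> real" where "Psi k = (deriv ^^ k) psi"

lemma Psi_deriv: "(Psi k has_real_derivative Psi (Suc k) x) (at x)"
proof -
  have "(\<exists>L. (deriv ^^ k) psi = gS L) \<and> (\<forall>x. ((deriv ^^ k) psi has_real_derivative (deriv ^^ Suc k) psi x) (at x))"
  proof (rule smooth_class[where Q="\<lambda>f. \<exists>L. f = gS L"])
    fix f :: "real \<Rightarrow> real" assume "\<exists>L. f = gS L"
    then obtain L where f: "f = gS L" by blast
    show "\<exists>f'. (\<forall>x. (f has_real_derivative f' x) (at x)) \<and> (\<exists>L. f' = gS L)"
      by (rule exI[of _ "gS (DL L)"]) (auto simp: f gS_deriv)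
  next
    show "\<exists>L. psi = gS L" by (auto simp: psi_def)
  qed
  then show ?thesis by (simp add: Psi_def)
qed

lemma psi_pos: "x > 0 \<Longrightarrow> psi x > 0" and psi_nonneg: "psi x \<ge> 0" and psi_zero: "x \<le> 0 \<Longrightarrow> psi x = 0"
  by (auto simp: psi_def gS_def SL_def)

lemma Psi0: "Psi 0 = psi" by (simp add: Psi_def)



definition SP :: "real \<Rightarrow> real \<Rightarrow> (real \<times> nat \<times> nat) list \<Rightarrow> real \<Rightarrow> real" where
  "SP a b L x = sum_list (map (\<lambda>(c,i,j). c * Psi i (x - a) * Psi j (b - x)) L)"

fun D2 :: "real \<times> nat \<times> nat \<Rightarrow> (real \<times> nat \<times> nat) list" where
  "D2 (c,i,j) = [(c, Suc i, j), (- c, i, Suc j)]"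

lemma term2_deriv: "((\<lambda>x. c * Psi i (x - a) * Psi j (b - x)) has_real_derivative
   (c * Psi (Suc i) (x - a) * Psi j (b - x) + (- c * Psi i (x - a) * Psi (Suc j) (b - x)))) (at x)"
proof -
  have d1: "((\<lambda>x. Psi i (x - a)) has_real_derivative Psi (Suc i) (x - a) * 1) (at x)"
    by (rule DERIV_chain2[OF Psi_deriv]) (auto intro!: derivative_eq_intros)
  have d2: "((\<lambda>x. Psi j (b - x)) has_real_derivative Psi (Suc j) (b - x) * (-1)) (at x)"
    by (rule DERIV_chain2[OF Psi_deriv]) (auto intro!: derivative_eq_intros)
  show ?thesis using DERIV_mult[OF DERIV_cmult[OF d1, of c] d2] by (simp add: algebra_simps)
qed

lemma SP_deriv: "(SP a b L has_real_derivative SP a b (concat (map D2 L)) x) (at x)"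
proof (induction L)
  case Nil
  then show ?case by (simp add: SP_def)
next
  case (Cons t L)
  obtain c i j where t: "t = (c,i,j)" by (cases t) auto
  have e: "SP a b (t # L) = (\<lambda>x. c * Psi i (x - a) * Psi j (b - x) + SP a b L x)"
    by (auto simp: SP_def t)
  have e2: "SP a b (concat (map D2 (t # L))) x = (c * Psi (Suc i) (x - a) * Psi j (b - x) + (- c * Psi i (x - a) * Psi (Suc j) (b - x))) + SP a b (concat (map D2 L)) x"
    by (simp add: SP_def t)
  show ?case unfolding e e2
    by (rule DERIV_add[OF term2_deriv Cons.IH])
qed

definition bump :: "real \<Rightarrow> real \<Rightarrow> real \<Rightarrow> real" where
  "bump a b x = psi (x - a) * psi (b - x)"

lemma bump_smooth: "((deriv ^^ k) (bump a b)) differentiable (at x)"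
proof -
  have "(\<exists>L. (deriv ^^ k) (bump a b) = SP a b L) \<and> (\<forall>x. ((deriv ^^ k) (bump a b) has_real_derivative (deriv ^^ Suc k) (bump a b) x) (at x))"
  proof (rule smooth_class[where Q="\<lambda>f. \<exists>L. f = SP a b L"])
    fix f :: "real \<Rightarrow> real" assume "\<exists>L. f = SP a b L"
    then obtain L where f: "f = SP a b L" by blast
    show "\<exists>f'. (\<forall>x. (f has_real_derivative f' x) (at x)) \<and> (\<exists>L. f' = SP a b L)"
      by (rule exI[of _ "SP a b (concat (map D2 L))"]) (auto simp: f SP_deriv)
  next
    show "\<exists>L. bump a b = SP a b L"
      by (rule exI[of _ "[(1,0,0)]"]) (auto simp: SP_def bump_def Psi0)
  qed
  then show ?thesis using real_differentiable_def by blast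
qed

lemma bump_C0: "0 < a \<Longrightarrow> C0_inf_pos (bump a b)"
  unfolding C0_inf_pos_def
proof (intro conjI allI)
  show "\<And>k x. (deriv ^^ k) (bump a b) differentiable at x" by (rule bump_smooth)
  assume "0 < a"
  show "\<exists>a' b'. 0 < a' \<and> (\<forall>t. t < a' \<or> b' < t \<longrightarrow> bump a b t = 0)"
    using \<open>0 < a\<close> by (intro exI[of _ a] exI[of _ b]) (auto simp: bump_def psi_zero)
qed

lemma bump_nonneg: "bump a b x \<ge> 0" by (simp add: bump_def psi_nonneg)
lemma bump_pos: "a < x \<Longrightarrow> x < b \<Longrightarrow> bump a b x > 0" by (simp add: bump_def psi_pos)
lemma bump_cont: "continuous_on S (bump a b)"
  using bump_smooth[of 0] by (simp add: differentiable_imp_continuous_within continuous_at_imp_continuous_on)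


lemma sign_lemma: "\<bar>x - y\<bar> < \<bar>y\<bar> \<Longrightarrow> x * y > (0::real)"
  by (smt (verit) mult_neg_neg mult_pos_pos)

lemma dA_other:
  assumes "m \<noteq> (1, j)"
  shows "dA M N h j a \<phi> m = 0"
proof -
  obtain i k where m: "m = (i, k)" by force
  have "(\<lambda>s. Aop M N h (\<lambda>k. if k = j then s * a else 0) \<phi> m) = (\<lambda>s. Aop M N h (\<lambda>_. 0) \<phi> m)"
    using assms by (auto simp: Aop_def m Let_def)
  then show ?thesis unfolding dA_def by (simp add: DERIV_imp_deriv[OF DERIV_const])
qed

lemma dA_same:
  "dA M N h j a \<phi> (1, j) = a * (ext0 M N \<phi> (2, j) / 2 - 2 * ext0 M N \<phi> (1, j)) / h\<^sup>2"
proof -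
  define P where "P = ext0 M N \<phi> (1, j)"
  define Q where "Q = ext0 M N \<phi> (2, j)"
  define R where "R = ext0 M N \<phi> (1, j + 1)"
  define S where "S = ext0 M N \<phi> (1, j - 1)"
  have e: "(\<lambda>s. Aop M N h (\<lambda>k. if k = j then s * a else 0) \<phi> (1, j))
     = (\<lambda>s. (2 * (1 + 1 / (1 + s * a)) * P - 2 / (2 + s * a) * Q - R - S) / h\<^sup>2)"
    by (auto simp: Aop_def Let_def P_def Q_def R_def S_def)
  have "((\<lambda>s. (2 * (1 + 1 / (1 + s * a)) * P - 2 / (2 + s * a) * Q - R - S)) has_real_derivative
      a * (Q / 2 - 2 * P)) (at 0)"
    by (auto intro!: derivative_eq_intros simp: field_simps power2_eq_square)
  then have "((\<lambda>s. (2 * (1 + 1 / (1 + s * a)) * P - 2 / (2 + s * a) * Q - R - S) / h\<^sup>2) has_real_derivative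
      a * (Q / 2 - 2 * P) / h\<^sup>2) (at 0)"
    by (rule DERIV_cdivide)
  then show ?thesis unfolding dA_def e P_def Q_def by (rule DERIV_imp_deriv)
qed

lemma finite_interior: "finite (interior_nodes M N)"
  by (rule finite_subset[of _ "{0..M} \<times> {0..N}"]) (auto simp: interior_nodes_def)

theorem proposition2p21:
  fixes h T :: real and M N :: nat
    and F u X :: "real \<Rightarrow> nat \<times> nat \<Rightarrow> real"
    and u0 c :: "nat \<times> nat \<Rightarrow> real"
  assumes h_pos: "h > 0" and M2: "M \<ge> 2" and N2: "N \<ge> 2" and T_pos: "T > 0"
    \<comment> \<open>reference state: \<partial>_t u + A u = F, u(0) = u0\<close>
    and u_cont: "\<forall>m \<in> interior_nodes M N. continuous_on {0..} (\<lambda>t. u t m)"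
    and u_init: "\<forall>m \<in> interior_nodes M N. u 0 m = u0 m"
    and u_eq: "\<forall>m \<in> interior_nodes M N. \<forall>t > 0.
                 ((\<lambda>s. u s m) has_real_derivative (F t m - A0 M N h (u t) m)) (at t)"
    \<comment> \<open>discrete non-degeneracy condition\<close>
    and nondeg: "\<forall>t > 0. \<forall>j \<in> {1..N-1}.
                   ext0 M N (u t) (2, j) / 2 - 2 * ext0 M N (u t) (1, j) \<noteq> 0"
    \<comment> \<open>adjoint state: -\<partial>_t X + A X = c \<delta>_{t=T}, i.e. X(T) = c, -X' + AX = 0 on (0,T), X = 0 after T\<close>
    and X_cont: "\<forall>m \<in> interior_nodes M N. continuous_on {0..T} (\<lambda>t. X t m)"
    and X_eq: "\<forall>m \<in> interior_nodes M N. \<forall>t \<in> {0<..<T}.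
                 ((\<lambda>s. X s m) has_real_derivative (A0 M N h (X t) m)) (at t)"
    and X_T: "\<forall>m \<in> interior_nodes M N. X T m = c m"
    and X_after: "\<forall>m \<in> interior_nodes M N. \<forall>t > T. X t m = 0"
    \<comment> \<open>orthogonality hypothesis\<close>
    and orth: "\<forall>j \<in> {1..N-1}. \<forall>\<mu>. C0_inf_pos \<mu> \<longrightarrow>
                 integral {0..T} (\<lambda>t. \<Sum>m \<in> interior_nodes M N.
                    X t m * dA M N h j (\<mu> t) (u t) m) = 0"
  shows "\<forall>t > 0. \<forall>j \<in> {1..N-1}. X t (1, j) = 0"
proof (intro allI impI ballI)
  fix t :: real and j :: nat assume t: "t > 0" and j: "j \<in> {1..N-1}"
  have jint: "(1, j) \<in> interior_nodes M N" using M2 j by (auto simp: interior_nodes_def)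
  show "X t (1, j) = 0"
  proof (cases "t > T")
    case True
    then show ?thesis using X_after jint by blast
  next
    case False
    then have tT: "t \<le> T" by simp
    define g where "g s = ext0 M N (u s) (2, j) / 2 - 2 * ext0 M N (u s) (1, j)" for s
    define G where "G s = X s (1, j) * g s" for s
    have contX: "continuous_on {0..T} (\<lambda>s. X s (1, j))" using X_cont jint by blast
    have cu1: "continuous_on {0..T} (\<lambda>s. u s (1, j))"
      using u_cont jint by (auto intro: continuous_on_subset)
    have cu2: "continuous_on {0..T} (\<lambda>s. ext0 M N (u s) (2, j))"
    proof (cases "(2, j) \<in> interior_nodes M N")
      case True
      then have "continuous_on {0..T} (\<lambda>s. u s (2, j))"
        using u_cont by (auto intro: continuous_on_subset)
      then show ?thesis using True by (simp add: ext0_def)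
    next
      case False
      then show ?thesis by (simp add: ext0_def)
    qed
    have contg: "continuous_on {0..T} g"
      unfolding g_def using jint cu1 cu2 by (auto simp: ext0_def intro!: continuous_intros)
    have contG: "continuous_on {0..T} G"
      unfolding G_def using contX contg by (intro continuous_intros)
    show ?thesis
    proof (rule ccontr)
      assume Xne: "X t (1, j) \<noteq> 0"
      have "g t \<noteq> 0" using nondeg t j by (simp add: g_def)
      then have Gt: "G t \<noteq> 0" using Xne by (simp add: G_def)
      have tin: "t \<in> {0..T}" using t tT by simp
      obtain d where d: "d > 0" and dG: "\<forall>s\<in>{0..T}. dist s t < d \<longrightarrow> dist (G s) (G t) < \<bar>G t\<bar>"
        using contG tin Gt unfolding continuous_on_iff by (metis zero_less_abs_iff)
      define e where "e = min d t"
      have e0: "e > 0" using d t by (simp add: e_def)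
      define a where "a = t - e / 2"
      define b where "b = t + e / 2"
      have a0: "a > 0" using e0 t by (simp add: a_def e_def)
      define \<mu> where "\<mu> = bump a b"
      have C0: "C0_inf_pos \<mu>" using a0 by (simp add: \<mu>_def bump_C0)
      have "integral {0..T} (\<lambda>s. \<Sum>m \<in> interior_nodes M N. X s m * dA M N h j (\<mu> s) (u s) m) = 0"
        using orth j C0 by blast
      moreover have "(\<lambda>s. \<Sum>m \<in> interior_nodes M N. X s m * dA M N h j (\<mu> s) (u s) m)
          = (\<lambda>s. inverse (h\<^sup>2 * G t) *\<^sub>R (G s * \<mu> s * G t))"
      proof
        fix s
        have "(\<Sum>m \<in> interior_nodes M N. X s m * dA M N h j (\<mu> s) (u s) m)
            = X s (1, j) * dA M N h j (\<mu> s) (u s) (1, j)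
              + (\<Sum>m \<in> interior_nodes M N - {(1, j)}. X s m * dA M N h j (\<mu> s) (u s) m)"
          by (rule sum.remove[OF finite_interior jint])
        also have "(\<Sum>m \<in> interior_nodes M N - {(1, j)}. X s m * dA M N h j (\<mu> s) (u s) m) = 0"
          by (rule sum.neutral) (auto simp: dA_other)
        also have "X s (1, j) * dA M N h j (\<mu> s) (u s) (1, j) + 0 = X s (1, j) * (\<mu> s * g s / h\<^sup>2)"
          unfolding dA_same g_def by simp
        also have "\<dots> = inverse (h\<^sup>2 * G t) *\<^sub>R (G s * \<mu> s * G t)"
          using Gt h_pos unfolding G_def by (simp add: field_simps)
        finally show "(\<Sum>m \<in> interior_nodes M N. X s m * dA M N h j (\<mu> s) (u s) m)
            = inverse (h\<^sup>2 * G t) *\<^sub>R (G s * \<mu> s * G t)" .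
      qed
      ultimately have "integral {0..T} (\<lambda>s. inverse (h\<^sup>2 * G t) *\<^sub>R (G s * \<mu> s * G t)) = 0"
        by simp
      then have "inverse (h\<^sup>2 * G t) * integral {0..T} (\<lambda>s. G s * \<mu> s * G t) = 0"
        by simp
      then have I0: "integral {0..T} (\<lambda>s. G s * \<mu> s * G t) = 0"
        using Gt h_pos by simp
      have contF: "continuous_on {0..T} (\<lambda>s. G s * \<mu> s * G t)"
        using contG bump_cont[of "{0..T}" a b] unfolding \<mu>_def by (intro continuous_intros)
      have hi: "((\<lambda>s. G s * \<mu> s * G t) has_integral 0) (cbox 0 T)"
        using integrable_continuous_interval[OF contF] I0 by (metis cbox_interval has_integral_integral)
      have nonneg: "0 \<le> G s * \<mu> s * G t" if s: "s \<in> box 0 T" for s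
      proof (cases "a < s \<and> s < b")
        case True
        then have "dist s t < d" using e0 unfolding a_def b_def e_def dist_real_def by auto
        moreover have "s \<in> {0..T}" using s by (auto simp: box_real)
        ultimately have "dist (G s) (G t) < \<bar>G t\<bar>" using dG by blast
        then have "G s * G t > 0" by (intro sign_lemma) (simp add: dist_real_def)
        moreover have "\<mu> s \<ge> 0" by (simp add: \<mu>_def bump_nonneg)
        ultimately show ?thesis by (metis mult.commute mult.left_commute mult_nonneg_nonneg less_imp_le)
      next
        case False
        then have "\<mu> s = 0" by (auto simp: \<mu>_def bump_def psi_zero)
        then show ?thesis by simp
      qed
      have "G t * \<mu> t * G t = 0"
        by (rule has_integral_0_cbox_imp_0[OF _ nonneg hi])
           (use contF tin T_pos in \<open>auto simp: cbox_interval box_real\<close>)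
      moreover have "\<mu> t > 0" unfolding \<mu>_def by (rule bump_pos) (use e0 in \<open>auto simp: a_def b_def\<close>)
      ultimately show False using Gt by simp
    qed
  qed
qed

end
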